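(* Work in the ring $\mathcal O_{\mathbb{Q}(\sqrt{-3})}=\mathbb{Z}[\frac{1+\sqrt{-3}}{2}]$. If $a$ and $b$ are relatively prime positive integers and $3$ divides $a$ in $\mathbb{Z}$, then there is no nonzero $z\in\mathcal O_{\mathbb{Q}(\sqrt{-3})}$ with $I_2^*(z)=a/b$.
   Context: $\mathcal O_{\mathbb{Q}(\sqrt{-3})}$ is a unique factorization domain. $|z|=\sqrt{z\bar z}$, $\arg(z)\in[0,2\pi)$. Let $A$ be the set of nonzero $z\in\mathcal O_{\mathbb{Q}(\sqrt{-3})}$ with $0\le \arg(z)<\pi/3$. Two elements are relatively prime if they have no nonunit common divisor. For nonzero $x,z$, write $x\Diamond z$ iff $x\in A$, $x\mid z$, and $x$ is relatively prime to $z/x$. For $m\in\mathbb{Z}$ define $\delta_m^*(z)=\sum_{x\Diamond z}|x|^m$ and $I_m^*(z)=\delta_m^*(z)/|z|^m$. *)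

theory Defs
  imports "HOL-Analysis.Analysis"
begin

definition eis_omega :: complex where
  "eis_omega = Complex (1/2) (sqrt 3 / 2)"

definition Eis :: "complex set" where
  "Eis = {of_int m + of_int n * eis_omega | m n :: int. True}"

definition eis_dvd :: "complex \<Rightarrow> complex \<Rightarrow> bool" where
  "eis_dvd x z \<longleftrightarrow> (\<exists>w\<in>Eis. z = x * w)"

definition eis_unit :: "complex \<Rightarrow> bool" where
  "eis_unit u \<longleftrightarrow> u \<in> Eis \<and> eis_dvd u 1"

definition eis_rel_prime :: "complex \<Rightarrow> complex \<Rightarrow> bool" where
  "eis_rel_prime x y \<longleftrightarrow> (\<forall>d\<in>Eis. eis_dvd d x \<and> eis_dvd d y \<longrightarrow> eis_unit d)"

definition arg02 :: "complex \<Rightarrow> real" where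
  "arg02 z = (if Arg z < 0 then Arg z + 2 * pi else Arg z)"

definition eis_A :: "complex set" where
  "eis_A = {z \<in> Eis. z \<noteq> 0 \<and> 0 \<le> arg02 z \<and> arg02 z < pi / 3}"

definition eis_diamond :: "complex \<Rightarrow> complex \<Rightarrow> bool" where
  "eis_diamond x z \<longleftrightarrow> x \<noteq> 0 \<and> z \<noteq> 0 \<and> x \<in> eis_A \<and> eis_dvd x z \<and> eis_rel_prime x (z / x)"

definition delta_star :: "int \<Rightarrow> complex \<Rightarrow> real" where
  "delta_star m z = (\<Sum>x\<in>{x. eis_diamond x z}. cmod x powi m)"

definition I_star :: "int \<Rightarrow> complex \<Rightarrow> real" where
  "I_star m z = delta_star m z / cmod z powi m"

end

theory Submission
  imports Defs
begin


lemma omega_sq: "eis_omega * eis_omega = eis_omega - 1"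
  by (simp add: eis_omega_def complex_eq_iff)

lemma Eis_iff: "z \<in> Eis \<longleftrightarrow> (\<exists>m n. z = of_int m + of_int n * eis_omega)"
  by (auto simp: Eis_def)

lemma Eis_mult_closed:
  "(of_int m + of_int n * eis_omega) * (of_int p + of_int q * eis_omega)
   = of_int (m*p - n*q) + of_int (m*q + n*p + n*q) * eis_omega"
proof -
  have "(of_int m + of_int n * eis_omega) * (of_int p + of_int q * eis_omega)
     = of_int (m*p) + of_int (m*q + n*p) * eis_omega + of_int (n*q) * (eis_omega * eis_omega)"
    by (simp add: algebra_simps)
  also have "\<dots> = of_int (m*p - n*q) + of_int (m*q + n*p + n*q) * eis_omega"
    by (simp add: omega_sq algebra_simps)
  finally show ?thesis .
qed

lemma Eis_0: "0 \<in> Eis"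
  unfolding Eis_iff by (rule exI[of _ 0], rule exI[of _ 0]) simp
lemma Eis_1: "1 \<in> Eis"
  unfolding Eis_iff by (rule exI[of _ 1], rule exI[of _ 0]) simp

lemma Eis_add: assumes "a \<in> Eis" "b \<in> Eis" shows "a + b \<in> Eis"
proof -
  obtain m n p q where "a = of_int m + of_int n * eis_omega" "b = of_int p + of_int q * eis_omega"
    using assms by (auto simp: Eis_iff)
  then have "a + b = of_int (m+p) + of_int (n+q) * eis_omega" by (simp add: algebra_simps)
  then show ?thesis unfolding Eis_iff by blast
qed

lemma Eis_uminus: assumes "a \<in> Eis" shows "- a \<in> Eis"
proof -
  obtain m n where "a = of_int m + of_int n * eis_omega"
    using assms by (auto simp: Eis_iff)
  then have "- a = of_int (-m) + of_int (-n) * eis_omega" by (simp add: algebra_simps)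
  then show ?thesis unfolding Eis_iff by blast
qed

lemma Eis_diff: "a \<in> Eis \<Longrightarrow> b \<in> Eis \<Longrightarrow> a - b \<in> Eis"
  using Eis_add[of a "-b"] Eis_uminus[of b] by simp

lemma Eis_mult: "a \<in> Eis \<Longrightarrow> b \<in> Eis \<Longrightarrow> a * b \<in> Eis"
  unfolding Eis_iff using Eis_mult_closed by metis

typedef eis = Eis morphisms cx Abs_eis using Eis_0 by blast

setup_lifting type_definition_eis

instantiation eis :: comm_ring_1
begin
lift_definition zero_eis :: eis is 0 by (rule Eis_0)
lift_definition one_eis :: eis is 1 by (rule Eis_1)
lift_definition plus_eis :: "eis \<Rightarrow> eis \<Rightarrow> eis" is "(+)" by (rule Eis_add)
lift_definition minus_eis :: "eis \<Rightarrow> eis \<Rightarrow> eis" is "(-)" by (rule Eis_diff)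
lift_definition uminus_eis :: "eis \<Rightarrow> eis" is uminus by (rule Eis_uminus)
lift_definition times_eis :: "eis \<Rightarrow> eis \<Rightarrow> eis" is "(*)" by (rule Eis_mult)
instance apply standard
  apply (transfer, simp add: algebra_simps)
  apply (transfer, simp add: algebra_simps)
  apply (transfer, simp add: algebra_simps)
  apply (transfer, simp add: algebra_simps)
  apply (transfer, simp add: algebra_simps)
  apply (transfer, simp add: algebra_simps)
  apply (transfer, simp add: algebra_simps)
  apply (transfer, simp add: algebra_simps)
  apply (transfer, simp add: algebra_simps)
  apply (transfer, simp add: algebra_simps)
  done
end

instance eis :: idom
  by standard (transfer; simp)

definition mk :: "int \<Rightarrow> int \<Rightarrow> eis" where
  "mk m n = Abs_eis (of_int m + of_int n * eis_omega)"

lemma cx_mk: "cx (mk m n) = of_int m + of_int n * eis_omega"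
  unfolding mk_def by (rule Abs_eis_inverse) (auto simp: Eis_iff)

lemma eis_cases: "\<exists>m n. x = mk m n"
proof -
  obtain m n where "cx x = of_int m + of_int n * eis_omega" using cx[of x] by (auto simp: Eis_iff)
  then show ?thesis by (metis cx_inverse mk_def)
qed

lemma Re_c: "Re (of_int m + of_int n * eis_omega) = m + n/2"
  by (simp add: eis_omega_def)
lemma Im_c: "Im (of_int m + of_int n * eis_omega) = n * sqrt 3 / 2"
  by (simp add: eis_omega_def)

lemma mk_inj[simp]: "mk m n = mk p q \<longleftrightarrow> m = p \<and> n = q"
proof
  assume "mk m n = mk p q"
  then have h: "of_int m + of_int n * eis_omega = (of_int p + of_int q * eis_omega :: complex)"
    by (metis cx_mk)
  have "n * sqrt 3 / 2 = q * sqrt 3 / 2" using arg_cong[OF h, of Im] unfolding Im_c .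
  then have "n = q" by simp
  moreover have "m + n/2 = p + q/(2::real)" using arg_cong[OF h, of Re] unfolding Re_c .
  ultimately show "m = p \<and> n = q" by simp
qed simp

lemma mk_mult: "mk m n * mk p q = mk (m*p - n*q) (m*q + n*p + n*q)"
  by (rule cx_inject[THEN iffD1]) (simp add: times_eis.rep_eq cx_mk Eis_mult_closed)
lemma mk_add: "mk m n + mk p q = mk (m+p) (n+q)"
  by (rule cx_inject[THEN iffD1]) (simp add: plus_eis.rep_eq cx_mk algebra_simps)
lemma mk_diff: "mk m n - mk p q = mk (m-p) (n-q)"
  by (rule cx_inject[THEN iffD1]) (simp add: minus_eis.rep_eq cx_mk algebra_simps)
lemma mk_uminus: "- mk m n = mk (-m) (-n)"
  by (rule cx_inject[THEN iffD1]) (simp add: uminus_eis.rep_eq cx_mk algebra_simps)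
lemma mk_0: "mk 0 0 = 0"
  by (rule cx_inject[THEN iffD1]) (simp add: cx_mk zero_eis.rep_eq)
lemma mk_1: "mk 1 0 = 1"
  by (rule cx_inject[THEN iffD1]) (simp add: cx_mk one_eis.rep_eq)



abbreviation un :: "eis \<Rightarrow> bool" where "un x \<equiv> x dvd 1"

definition N :: "eis \<Rightarrow> int" where
  "N x = (THE k. \<exists>m n. x = mk m n \<and> k = m*m + m*n + n*n)"

lemma N_mk[simp]: "N (mk m n) = m*m + m*n + n*n"
  unfolding N_def by (rule the_equality) auto

lemma N_mult: "N (x*y) = N x * N y"
proof -
  obtain m n p q where "x = mk m n" "y = mk p q" using eis_cases by metis
  have "N (mk m n * mk p q) = N (mk m n) * N (mk p q)" by (simp only: mk_mult N_mk) algebra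
  then show ?thesis using \<open>x = mk m n\<close> \<open>y = mk p q\<close> by simp
qed

lemma four_N: "4*(m*m+m*n+n*n) = (2*m+n)^2 + 3*n^2" for m n :: int
  by algebra

lemma N_nonneg: "0 \<le> N x"
proof -
  obtain m n where x: "x = mk m n" using eis_cases by metis
  have "0 \<le> (2*m+n)^2 + 3*n^2" by simp
  then have "0 \<le> 4*(m*m+m*n+n*n)" using four_N[of m n] by linarith
  then show ?thesis using x by simp
qed

lemma N_eq_0[simp]: "N x = 0 \<longleftrightarrow> x = 0"
proof
  assume h: "N x = 0"
  obtain m n where x: "x = mk m n" using eis_cases by metis
  have "(2*m+n)^2 + 3*n^2 = 0" using four_N[of m n] h x by simp
  then have "n = 0" "2*m+n = 0" by (smt (verit) zero_le_power2 power2_eq_square mult_eq_0_iff)+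
  then show "x = 0" using x mk_0 by simp
qed (simp add: mk_0[symmetric])

lemma N_pos: "x \<noteq> 0 \<Longrightarrow> 0 < N x"
  using N_nonneg[of x] N_eq_0[of x] by linarith

lemma N_1[simp]: "N 1 = 1"
  by (simp add: mk_1[symmetric])

lemma unit_iff: "un x \<longleftrightarrow> N x = 1"
proof
  assume "un x"
  then obtain y where "1 = x * y" by (auto simp: dvd_def)
  then have "N x * N y = 1" using N_mult[of x y] by simp
  then show "N x = 1" using N_nonneg[of x] by (simp add: zmult_eq_1_iff) 
next
  assume h: "N x = 1"
  obtain m n where x: "x = mk m n" using eis_cases by metis
  have "mk m n * mk (m+n) (-n) = mk (m*m+m*n+n*n) 0" by (simp only: mk_mult mk_inj) algebra
  then have "x * mk (m+n) (-n) = mk (N x) 0" using x by simp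
  then have "x * mk (m+n) (-n) = 1" using h mk_1 by simp
  then show "un x" by (metis dvd_def)
qed

lemma sq_le1: "(n::int)*n \<le> 1 \<Longrightarrow> -1 \<le> n \<and> n \<le> 1"
proof (rule ccontr)
  assume h: "n*n \<le> 1" "\<not> (-1 \<le> n \<and> n \<le> 1)"
  then have n2: "2 \<le> \<bar>n\<bar>" by linarith
  then have "2*2 \<le> \<bar>n\<bar>*\<bar>n\<bar>" by (rule mult_mono) (use n2 in auto)
  then show False using h(1) by (simp add: abs_mult[symmetric])
qed

lemma units_list:
  assumes "N (mk a b) = 1"
  shows "(a,b) \<in> {(1,0),(0,1),(-1,1),(-1,0),(0,-1),(1,-1)}"
proof -
  have h: "a*a+a*b+b*b = 1" using assms by simp
  have "(2*a+b)^2 + 3*b^2 = 4" using four_N[of a b] h by simp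
  then have "(2*a+b)*(2*a+b) + 3*(b*b) = 4" by (simp add: power2_eq_square)
  then have "b*b \<le> 1" using zero_le_square[of "2*a+b"] by linarith
  from sq_le1[OF this] have b: "-1 \<le> b" "b \<le> 1" by auto
  have "(2*b+a)^2 + 3*a^2 = 4" using four_N[of b a] h by (simp add: algebra_simps)
  then have "(2*b+a)*(2*b+a) + 3*(a*a) = 4" by (simp add: power2_eq_square)
  then have "a*a \<le> 1" using zero_le_square[of "2*b+a"] by linarith
  from sq_le1[OF this] have a: "-1 \<le> a" "a \<le> 1" by auto
  have "a \<in> {-1,0,1}" "b \<in> {-1,0,1}" using a b by auto
  then show ?thesis using h by auto
qed

lemma eucl_div:
  assumes "b \<noteq> 0"
  shows "\<exists>q r. a = q*b + r \<and> N r < N b"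
proof -
  obtain b1 b2 where b: "b = mk b1 b2" using eis_cases by metis
  define c where "c = mk (b1+b2) (-b2)"
  define M where "M = N b"
  have M: "0 < M" using N_pos[OF assms] M_def by simp
  have bc: "b * c = mk M 0" unfolding M_def c_def b by (simp add: mk_mult; algebra)
  have Nc: "N c = M" unfolding M_def c_def b by (simp; algebra)
  obtain p q where pq: "a * c = mk p q" using eis_cases by metis
  define s where "s = (2*p+M) div (2*M)"
  define t where "t = (2*q+M) div (2*M)"
  define e1 where "e1 = p - s*M"
  define e2 where "e2 = q - t*M"
  have "(2*p+M) mod (2*M) = (2*p+M) - (2*M) * s" unfolding s_def by (metis minus_mult_div_eq_mod)
  then have m1: "(2*p+M) mod (2*M) = 2*e1 + M" unfolding e1_def by (simp add: algebra_simps)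
  have "0 \<le> (2*p+M) mod (2*M)" "(2*p+M) mod (2*M) < 2*M" using M by simp_all
  then have e1: "2*\<bar>e1\<bar> \<le> M" unfolding m1 by linarith
  have "(2*q+M) mod (2*M) = (2*q+M) - (2*M) * t" unfolding t_def by (metis minus_mult_div_eq_mod)
  then have m2: "(2*q+M) mod (2*M) = 2*e2 + M" unfolding e2_def by (simp add: algebra_simps)
  have "0 \<le> (2*q+M) mod (2*M)" "(2*q+M) mod (2*M) < 2*M" using M by simp_all
  then have e2: "2*\<bar>e2\<bar> \<le> M" unfolding m2 by linarith
  define r where "r = a - mk s t * b"
  have "r * c = a*c - mk s t * (b * c)" unfolding r_def by (simp add: algebra_simps)
  also have "\<dots> = mk e1 e2" unfolding pq bc e1_def e2_def by (simp add: mk_mult mk_diff algebra_simps)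
  finally have rc: "r * c = mk e1 e2" .
  have "N r * M = e1*e1 + e1*e2 + e2*e2" using arg_cong[OF rc, of N] by (simp add: N_mult Nc)
  also have "4 * \<dots> \<le> 3 * M * M"
  proof -
    have "e1*e2 \<le> \<bar>e1\<bar>*\<bar>e2\<bar>" by (simp add: abs_mult[symmetric])
    moreover have "(2*\<bar>e1\<bar>)*(2*\<bar>e1\<bar>) \<le> M*M" by (rule mult_mono) (use e1 in auto)
    moreover have "(2*\<bar>e2\<bar>)*(2*\<bar>e2\<bar>) \<le> M*M" by (rule mult_mono) (use e2 in auto)
    moreover have "(2*\<bar>e1\<bar>)*(2*\<bar>e2\<bar>) \<le> M*M" by (rule mult_mono) (use e1 e2 in auto)
    moreover have "e1*e1 = \<bar>e1\<bar>*\<bar>e1\<bar>" "e2*e2 = \<bar>e2\<bar>*\<bar>e2\<bar>" by (simp_all add: abs_mult[symmetric])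
    ultimately show ?thesis by (simp add: algebra_simps)
  qed
  finally have "4 * N r * M \<le> 3 * M * M" by (simp add: algebra_simps)
  then have "4 * N r \<le> 3 * M" using M by (simp add: algebra_simps)
  then have "N r < N b" using M unfolding M_def by simp
  moreover have "a = mk s t * b + r" unfolding r_def by simp
  ultimately show ?thesis by blast
qed



lemma bezout: fixes x y :: eis shows "\<exists>d u v. d = u * x + v * y \<and> d dvd x \<and> d dvd y"
proof (cases "x = 0 \<and> y = 0")
  case True then show ?thesis by (rule_tac x=0 in exI) auto
next
  case False
  define P where "P = (\<lambda>(u::eis,v::eis). u * x + v * y \<noteq> 0)"
  define m where "m = (\<lambda>(u::eis,v::eis). nat (N (u * x + v * y)))"
  have "P (1,0) \<or> P (0,1)" using False unfolding P_def by auto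
  then have "\<exists>k. P k" by blast
  then obtain k where "P k" by blast
  from ex_has_least_nat[of P k m, OF this] obtain uv where
    uv: "P uv" "\<And>w. P w \<Longrightarrow> m uv \<le> m w" by blast
  obtain u v where uvd: "uv = (u,v)" by fastforce
  define d where "d = u * x + v * y"
  have d0: "d \<noteq> 0" using uv(1) uvd unfolding P_def d_def by simp
  have min: "N d \<le> N (u' * x + v' * y)" if "u' * x + v' * y \<noteq> 0" for u' v'
  proof -
    have "m uv \<le> m (u',v')" using uv(2)[of "(u',v')"] that unfolding P_def by simp
    then show ?thesis using uvd N_nonneg[of d] N_nonneg[of "u' * x + v' * y"] unfolding m_def d_def by simp
  qed
  have dv: "d dvd z" if z: "z = a * x + b * y" for z a b
  proof -
    obtain q r where qr: "z = q * d + r" "N r < N d" using eucl_div[OF d0] by blast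
    have "r = (a - q * u) * x + (b - q * v) * y" using qr(1) z unfolding d_def by (simp add: algebra_simps)
    then have "r = 0" using min[of "a - q * u" "b - q * v"] qr(2) by fastforce
    then show ?thesis using qr(1) by simp
  qed
  have "d dvd x" using dv[of x 1 0] by simp
  moreover have "d dvd y" using dv[of y 0 1] by simp
  ultimately show ?thesis unfolding d_def by blast
qed

definition cop :: "eis \<Rightarrow> eis \<Rightarrow> bool" where
  "cop x y \<longleftrightarrow> (\<forall>d. d dvd x \<longrightarrow> d dvd y \<longrightarrow> un d)"

lemma cop_iff: "cop x y \<longleftrightarrow> (\<exists>u v. u * x + v * y = 1)"
proof
  assume "cop x y"
  obtain d u v where d: "d = u * x + v * y" "d dvd x" "d dvd y" using bezout by blast
  then have "un d" using \<open>cop x y\<close> unfolding cop_def by blast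
  then obtain e where "1 = d * e" by (auto simp: dvd_def)
  then have "(e * u) * x + (e * v) * y = 1" using d(1) by (simp add: algebra_simps)
  then show "\<exists>u v. u * x + v * y = 1" by blast
next
  assume "\<exists>u v. u * x + v * y = 1"
  then obtain u v where h: "u * x + v * y = 1" by blast
  show "cop x y" unfolding cop_def
  proof (intro allI impI)
    fix d assume "d dvd x" "d dvd y"
    then have "d dvd u * x + v * y" by simp
    then show "un d" using h by simp
  qed
qed

lemma cop_sym: "cop x y \<Longrightarrow> cop y x"
  unfolding cop_def by blast

lemma cop_dvd2: "cop x y \<Longrightarrow> y' dvd y \<Longrightarrow> cop x y'"
  unfolding cop_def by (meson dvd_trans)

lemma cop_dvd1: "cop x y \<Longrightarrow> x' dvd x \<Longrightarrow> cop x' y"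
  unfolding cop_def by (meson dvd_trans)

lemma cop_mult2: assumes "cop x a" "cop x b" shows "cop x (a * b)"
proof -
  obtain u1 v1 where h1: "u1 * x + v1 * a = 1" using assms(1) cop_iff by blast
  obtain u2 v2 where h2: "u2 * x + v2 * b = 1" using assms(2) cop_iff by blast
  have "(u1 * x + v1 * a) * (u2 * x + v2 * b) = 1" using h1 h2 by simp
  then have "(u1 * u2 * x + u1 * v2 * b + v1 * a*u2) * x + (v1 * v2) * (a * b) = 1" by (simp add: algebra_simps)
  then show ?thesis using cop_iff by blast
qed

lemma cop_mult1: "cop a x \<Longrightarrow> cop b x \<Longrightarrow> cop (a * b) x"
  using cop_mult2 cop_sym by blast

lemma cop_1: "cop x 1"
  unfolding cop_def by simp

lemma cop_power2: "cop x a \<Longrightarrow> cop x (a^k)"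
  by (induction k) (simp_all add: cop_1 cop_mult2)

lemma cop_power1: "cop a x \<Longrightarrow> cop (a^k) x"
  using cop_power2 cop_sym by blast

lemma unit_dvd_iff: assumes "un u" shows "d dvd u * a \<longleftrightarrow> d dvd a"
proof
  assume "d dvd u * a"
  obtain u' where "1 = u * u'" using assms by (auto simp: dvd_def)
  then have "a = u' * (u * a)" by (metis mult.assoc mult.commute mult_1)
  then show "d dvd a" using \<open>d dvd u * a\<close> by (metis dvd_mult)
qed simp

lemma cop_unit1: "un u \<Longrightarrow> cop (u * a) x \<longleftrightarrow> cop a x"
  unfolding cop_def using unit_dvd_iff by blast

lemma cop_unit2: "un u \<Longrightarrow> cop x (u * a) \<longleftrightarrow> cop x a"
  unfolding cop_def using unit_dvd_iff by blast

lemma euclid: assumes "cop x y" "x dvd y * z" shows "x dvd z"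
proof -
  obtain u v where h: "u * x + v * y = 1" using assms(1) cop_iff by blast
  have "z = (u * z) * x + v * (y * z)" using h by (metis mult.assoc mult.commute mult_1 distrib_right)
  moreover have "x dvd (u * z) * x + v * (y * z)" using assms(2) by simp
  ultimately show ?thesis by simp
qed

definition irr :: "eis \<Rightarrow> bool" where
  "irr p \<longleftrightarrow> p \<noteq> 0 \<and> \<not> un p \<and> (\<forall>d. d dvd p \<longrightarrow> un d \<or> p dvd d)"

lemma irr_cop: "irr p \<Longrightarrow> \<not> p dvd x \<Longrightarrow> cop p x"
  unfolding irr_def cop_def by (blast intro: dvd_trans)

lemma irr_prime: "irr p \<Longrightarrow> p dvd a * b \<Longrightarrow> p dvd a \<or> p dvd b"
  by (meson irr_cop euclid)

lemma irr_N: assumes "irr p" shows "2 \<le> N p"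
proof -
  have "N p \<noteq> 1" "0 < N p" using assms N_pos[of p] unit_iff[of p] unfolding irr_def by auto
  then show ?thesis by linarith
qed

lemma exists_irr:
  assumes "z \<noteq> 0" "\<not> un z"
  shows "\<exists>p. irr p \<and> p dvd z"
proof -
  define P where "P = (\<lambda>d. d dvd z \<and> \<not> un d)"
  have "P z" using assms unfolding P_def by simp
  from ex_has_least_nat[of P z "\<lambda>d. nat (N d)", OF this] obtain p where
    p: "P p" "\<And>d. P d \<Longrightarrow> nat (N p) \<le> nat (N d)" by blast
  have p0: "p \<noteq> 0" using p(1) assms(1) unfolding P_def by auto
  have "irr p" unfolding irr_def
  proof (intro conjI allI impI)
    show "p \<noteq> 0" by (rule p0)
    show "\<not> un p" using p(1) unfolding P_def by simp
    fix d assume "d dvd p"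
    show "un d \<or> p dvd d"
    proof (cases "un d")
      case False
      then have "P d" using \<open>d dvd p\<close> p(1) unfolding P_def by (meson dvd_trans)
      then have le: "N p \<le> N d" using p(2)[of d] N_nonneg[of p] N_nonneg[of d] by simp
      obtain f where f: "p = d * f" using \<open>d dvd p\<close> by (auto simp: dvd_def)
      then have Nf: "N p = N d * N f" by (simp add: N_mult)
      have "d \<noteq> 0" "f \<noteq> 0" using p0 f by auto
      then have "0 < N d" "0 < N f" using N_pos by auto
      have "N d * N f \<le> N d * 1" using le Nf by simp
      then have "N f \<le> 1" using \<open>0 < N d\<close> by (simp only: mult_le_cancel_left_pos)
      then have "N f = 1" using \<open>0 < N f\<close> by linarith
      then have "un f" using unit_iff by simp
      then obtain g where "1 = f * g" by (auto simp: dvd_def)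
      then have "d = p * g" using f by (metis mult.assoc mult_1_right)
      then show ?thesis by simp
    qed simp
  qed
  then show ?thesis using p(1) unfolding P_def by blast
qed


definition AA :: "eis set" where "AA = {x. cx x \<in> eis_A}"


lemma cmod_sq: "(cmod (of_int m + of_int n * eis_omega))^2 = real_of_int (m * m+m * n+n * n)"
proof -
  have s3: "sqrt 3 * sqrt 3 = (3::real)" by simp
  have "(cmod (of_int m + of_int n * eis_omega))^2 = (m + n/2)^2 + (n * sqrt 3 / 2)^2"
    unfolding cmod_power2 Re_c Im_c by simp
  also have "\<dots> = real_of_int (m * m+m * n+n * n)" by (simp add: power2_eq_square field_simps s3)
  finally show ?thesis .
qed

lemma sqrt_less_iff': assumes "0 \<le> Q" shows "sqrt Q < t \<longleftrightarrow> (0 < t \<and> Q < t^2)"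
proof (cases "0 < t")
  case True
  have e1: "sqrt Q < sqrt (t^2) \<longleftrightarrow> Q < t^2" by (rule real_sqrt_less_iff)
  have e2: "sqrt (t^2) = t" using True by simp
  show ?thesis using e1 True unfolding e2 by simp
next
  case False
  have "0 \<le> sqrt Q" using assms by simp
  then have "\<not> sqrt Q < t" using False by linarith
  then show ?thesis using False by simp
qed

lemma arg02_nonneg: "0 \<le> arg02 z"
  unfolding arg02_def using Arg_bounded[of z] pi_gt_zero by auto

lemma AA_mk: "mk m n \<in> AA \<longleftrightarrow> 0 < m \<and> 0 \<le> n"
proof -
  define z where "z = (of_int m + of_int n * eis_omega :: complex)"
  have cz: "cx (mk m n) = z" unfolding z_def by (rule cx_mk)
  have zE: "z \<in> Eis" unfolding z_def Eis_iff by blast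
  have Rez: "Re z = m + n/2" unfolding z_def by (rule Re_c)
  have Imz: "Im z = n * sqrt 3 / 2" unfolding z_def by (rule Im_c)
  have Q: "(cmod z)^2 = real_of_int (m * m+m * n+n * n)" unfolding z_def by (rule cmod_sq)
  have nm: "cmod z = sqrt (real_of_int (m * m+m * n+n * n))" unfolding Q[symmetric] by simp
  have A: "mk m n \<in> AA \<longleftrightarrow> z \<noteq> 0 \<and> arg02 z < pi/3"
    unfolding AA_def mem_Collect_eq cz eis_A_def using zE arg02_nonneg[of z] by auto
  show ?thesis
  proof (cases "0 \<le> n")
    case False
    then have "real_of_int n < 0" by simp
    then have "real_of_int n * sqrt 3 < 0" by (simp add: mult_neg_pos)
    then have "Im z < 0" unfolding Imz by simp
    then have "Arg z < 0" using Arg_less_0[of z] by linarith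
    then have "pi \<le> arg02 z" unfolding arg02_def using Arg_bounded[of z] by auto
    then have "\<not> arg02 z < pi/3" using pi_gt_zero by linarith
    then show ?thesis unfolding A using False by simp
  next
    case True
    then have "0 \<le> Im z" unfolding Imz by simp
    then have Arg0: "0 \<le> Arg z" using Arg_less_0[of z] by linarith
    then have a02: "arg02 z = Arg z" unfolding arg02_def by simp
    show ?thesis
    proof (cases "z = 0")
      case True
      then have "m = 0 \<and> n = 0" using Rez Imz by auto
      then show ?thesis unfolding A using True by simp
    next
      case False
      have cpos: "0 < cmod z" using False by simp
      have "Arg z < pi/3 \<longleftrightarrow> cos (pi/3) < cos (Arg z)"
        using cos_mono_less_eq[of "pi/3" "Arg z"] Arg0 Arg_bounded[of z] pi_gt_zero by auto
      also have "\<dots> \<longleftrightarrow> 1/2 < Re z / cmod z" by (simp add: cos_60 cos_Arg[OF False])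
      also have "\<dots> \<longleftrightarrow> cmod z < 2 * Re z" using cpos by (simp add: field_simps)
      also have "\<dots> \<longleftrightarrow> 0 < 2 * Re z \<and> real_of_int (m * m+m * n+n * n) < (2 * Re z)^2"
        unfolding nm by (rule sqrt_less_iff') (simp only: Q[symmetric] zero_le_power2)
      also have "\<dots> \<longleftrightarrow> 0 < 2 * m+n \<and> m * m+m * n+n * n < (2 * m+n)^2"
      proof -
        have "2 * Re z = real_of_int (2 * m+n)" unfolding Rez by simp
        then show ?thesis by (simp only: of_int_less_iff of_int_power[symmetric] of_int_0 of_int_0_less_iff)
      qed
      also have "\<dots> \<longleftrightarrow> 0 < m"
      proof -
        have e: "(2 * m+n)^2 - (m * m+m * n+n * n) = 3 * (m * (m+n))" by algebra
        show ?thesis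
        proof
          assume h: "0 < 2 * m+n \<and> m * m+m * n+n * n < (2 * m+n)^2"
          then have "0 < m * (m+n)" using e by linarith
          then show "0 < m" using h True by (auto simp: zero_less_mult_iff)
        next
          assume "0 < m"
          then have "0 < m * (m+n)" using True by simp
          then show "0 < 2 * m+n \<and> m * m+m * n+n * n < (2 * m+n)^2" using e \<open>0 < m\<close> True by linarith
        qed
      qed
      finally show ?thesis unfolding A a02 using True False by auto
    qed
  qed
qed




lemma un_N: "un u \<Longrightarrow> N (u * x) = N x"
  by (simp add: N_mult unit_iff)

lemma unit_cases:
  assumes "un u"
  obtains "u = mk 1 0" | "u = mk 0 1" | "u = mk (-1) 1" | "u = mk (-1) 0" | "u = mk 0 (-1)" | "u = mk 1 (-1)"
proof -
  obtain a b where u: "u = mk a b" using eis_cases by metis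
  have "(a,b) \<in> {(1,0),(0,1),(-1,1),(-1,0),(0,-1),(1,-1)}"
    using units_list[of a b] assms u unit_iff by simp
  then show ?thesis using that u by auto
qed

lemma AA_unique:
  assumes "x \<in> AA" "un u" "u * x \<in> AA" shows "u = 1"
proof -
  obtain m n where x: "x = mk m n" using eis_cases by metis
  have mn: "0 < m" "0 \<le> n" using assms(1) x AA_mk by auto
  from assms(2) show ?thesis
  proof (cases rule: unit_cases)
    case 1 then show ?thesis by (simp add: mk_1)
  qed (use assms(3) x mn in \<open>simp_all add: mk_mult AA_mk\<close>)
qed

lemma AA_eq: "y \<in> AA \<Longrightarrow> y' \<in> AA \<Longrightarrow> un u \<Longrightarrow> y = u * y' \<Longrightarrow> y = y'"
  using AA_unique[of y' u] by simp

lemma one_AA: "1 \<in> AA"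
  using AA_mk[of 1 0] mk_1 by simp

lemma AA_exists:
  assumes "x \<noteq> 0" shows "\<exists>u. un u \<and> u * x \<in> AA"
proof -
  obtain m n where x: "x = mk m n" using eis_cases by metis
  have "\<not> (m = 0 \<and> n = 0)" using assms x mk_0 by auto
  then have "(m>0 \<and> n\<ge>0) \<or> (-n>0 \<and> m+n\<ge>0) \<or> (-m-n>0 \<and> m \<ge> 0) \<or> (-m>0 \<and> -n\<ge>0)
      \<or> (n>0 \<and> -m-n\<ge>0) \<or> (m+n>0 \<and> -m\<ge>0)" by arith
  moreover have "un (mk a b)" if "a * a + a * b + b * b = 1" for a b using that unit_iff by simp
  ultimately show ?thesis using x
    apply (elim disjE)
    subgoal by (rule exI[of _ "mk 1 0"]) (simp add: mk_mult AA_mk)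
    subgoal by (rule exI[of _ "mk 0 1"]) (simp add: mk_mult AA_mk)
    subgoal by (rule exI[of _ "mk (-1) 1"]) (simp add: mk_mult AA_mk)
    subgoal by (rule exI[of _ "mk (-1) 0"]) (simp add: mk_mult AA_mk)
    subgoal by (rule exI[of _ "mk 0 (-1)"]) (simp add: mk_mult AA_mk)
    subgoal by (rule exI[of _ "mk 1 (-1)"]) (simp add: mk_mult AA_mk)
    done
qed

definition nA :: "eis \<Rightarrow> eis" where
  "nA x = (SOME y. y \<in> AA \<and> (\<exists>u. un u \<and> y = u * x))"

lemma nA: assumes "x \<noteq> 0" shows "nA x \<in> AA" "\<exists>u. un u \<and> nA x = u * x"
proof -
  have "\<exists>y. y \<in> AA \<and> (\<exists>u. un u \<and> y = u * x)" using AA_exists[OF assms] by blast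
  then have "nA x \<in> AA \<and> (\<exists>u. un u \<and> nA x = u * x)" unfolding nA_def by (rule someI_ex)
  then show "nA x \<in> AA" "\<exists>u. un u \<and> nA x = u * x" by auto
qed

lemma unit_inv: "un u \<Longrightarrow> \<exists>u'. un u' \<and> u' * u = 1"
  by (metis dvd_def dvd_triv_right mult.commute)

lemma nA_eq: assumes "y \<in> AA" "un u" "y = u * x" shows "nA x = y"
proof -
  have x0: "x \<noteq> 0" using assms AA_def eis_A_def zero_eis.rep_eq by auto
  obtain v where v: "un v" "nA x = v * x" using nA(2)[OF x0] by blast
  obtain u' where u': "un u'" "u' * u = 1" using unit_inv[OF assms(2)] by blast
  have "nA x = (v * u') * y" using v(2) u' assms(3) by (simp add: algebra_simps)
  moreover have "un (v * u')" using mult_dvd_mono[OF v(1) u'(1)] by simp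
  ultimately show ?thesis using AA_eq[of "nA x" y "v * u'"] nA(1)[OF x0] assms(1) by simp
qed

definition U :: "eis \<Rightarrow> eis set" where
  "U z = {x. x \<in> AA \<and> (\<exists>w. z = x * w \<and> cop x w)}"

definition S :: "eis \<Rightarrow> int" where
  "S z = (\<Sum>x\<in>U z. N x)"

lemma AA_nz: "x \<in> AA \<Longrightarrow> x \<noteq> 0"
  using AA_def eis_A_def zero_eis.rep_eq by auto

lemma pow_decomp:
  assumes "irr p" "z \<noteq> 0" shows "\<exists>k w. z = p^k * w \<and> \<not> p dvd w"
  using assms(2)
proof (induction "nat (N z)" arbitrary: z rule: less_induct)
  case less
  show ?case
  proof (cases "p dvd z")
    case False then show ?thesis by (rule_tac x=0 in exI) auto
  next
    case True
    then obtain z' where z': "z = p * z'" by (auto simp: dvd_def)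
    have "z' \<noteq> 0" using less.prems z' by auto
    have "N z = N p * N z'" using z' N_mult by simp
    moreover have "2 \<le> N p" using irr_N[OF assms(1)] .
    moreover have "0 < N z'" using N_pos[OF \<open>z' \<noteq> 0\<close>] .
    moreover have "2 * N z' \<le> N p * N z'" by (rule mult_right_mono) (use irr_N[OF assms(1)] N_nonneg[of z'] in auto)
    ultimately have "N z' < N z" by linarith
    then have "nat (N z') < nat (N z)" using N_nonneg[of z'] by simp
    from less.hyps[OF this \<open>z' \<noteq> 0\<close>] obtain k w where "z' = p^k * w" "\<not> p dvd w" by blast
    then show ?thesis using z' by (rule_tac x="Suc k" in exI, rule_tac x=w in exI) (simp add: mult.assoc)
  qed
qed



lemma sq_mod3: "((a::int) * a) mod 3 \<in> {0,1}"
proof -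
  have "a mod 3 \<in> {0,1,2}" by auto
  moreover have "(a * a) mod 3 = ((a mod 3) * (a mod 3)) mod 3" by (simp add: mod_mult_eq)
  ultimately show ?thesis by auto
qed

lemma N_mod3: "N x mod 3 \<in> {0,1}"
proof -
  obtain m n where x: "x = mk m n" using eis_cases by metis
  have "N x = m * m + m * n + n * n" using x by simp
  also have "\<dots> = (m-n) * (m-n) + 3 * (m * n)" by algebra
  finally have "N x mod 3 = ((m-n) * (m-n)) mod 3" by simp
  then show ?thesis using sq_mod3 by simp
qed

lemma mod3_mult: "(a::int) mod 3 \<noteq> 0 \<Longrightarrow> b mod 3 \<noteq> 0 \<Longrightarrow> (a * b) mod 3 \<noteq> 0"
proof -
  assume "a mod 3 \<noteq> 0" "b mod 3 \<noteq> 0"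
  then have "a mod 3 \<in> {1,2}" "b mod 3 \<in> {1,2}" by auto
  moreover have "(a * b) mod 3 = ((a mod 3) * (b mod 3)) mod 3" by (simp add: mod_mult_eq)
  ultimately show ?thesis by auto
qed

lemma U_unit: assumes "un z" shows "U z = {1}"
proof
  show "U z \<subseteq> {1}"
  proof
    fix x assume "x \<in> U z"
    then obtain w where x: "x \<in> AA" "z = x * w" by (auto simp: U_def)
    then have "un x" using assms by (metis dvd_mult_left)
    then have "x * 1 \<in> AA" using x by simp
    then show "x \<in> {1}" using AA_unique[OF one_AA \<open>un x\<close>] by simp
  qed
  show "{1} \<subseteq> U z" unfolding U_def using one_AA by (auto simp: cop_def)
qed

lemma main:
  assumes "z \<noteq> 0" shows "finite (U z) \<and> S z mod 3 \<noteq> 0"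
  using assms
proof (induction "nat (N z)" arbitrary: z rule: less_induct)
  case less
  show ?case
  proof (cases "un z")
    case True
    then show ?thesis using U_unit by (simp add: S_def)
  next
    case False
    obtain p where p: "irr p" "p dvd z" using exists_irr[OF less.prems False] by blast
    obtain k w where kw: "z = p^k * w" "\<not> p dvd w" using pow_decomp[OF p(1) less.prems] by blast
    define P where "P = p^k"
    have k: "k \<noteq> 0"
    proof
      assume "k = 0"
      then show False using kw p(2) by simp
    qed
    have w0: "w \<noteq> 0" using kw less.prems by auto
    have P0: "P \<noteq> 0" using kw less.prems P_def by auto
    have z: "z = P * w" using kw P_def by simp
    have NP: "N P = N p ^ k" unfolding P_def by (induction k) (simp_all add: N_mult)
    have "2 \<le> N p" using irr_N[OF p(1)] .
    then have N2: "2 \<le> N p" .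
    obtain j where kj: "k = Suc j" using k not0_implies_Suc by blast
    have "1 \<le> N p ^ j" using N2 by (simp add: one_le_power)
    then have "N p * 1 \<le> N p * N p ^ j" by (rule mult_left_mono) (use N2 in auto)
    then have "N p \<le> N p * N p ^ j" by simp
    then have "2 \<le> N p * N p ^ j" using N2 by linarith
    then have "2 \<le> N P" unfolding NP kj by simp
    have "N z = N P * N w" using z N_mult by simp
    moreover have "2 * N w \<le> N P * N w" by (rule mult_right_mono) (use \<open>2 \<le> N P\<close> N_nonneg[of w] in auto)
    moreover have "0 < N w" using N_pos[OF w0] .
    ultimately have "N w < N z" by linarith
    then have "nat (N w) < nat (N z)" using N_nonneg[of w] by simp
    from less.hyps[OF this w0] have IH: "finite (U w)" "S w mod 3 \<noteq> 0" by auto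
    have copPw: "cop P w" unfolding P_def by (rule cop_power1) (rule irr_cop[OF p(1) kw(2)])
    define f where "f = (\<lambda>x. nA (P * x))"
    have f: "f x \<in> AA" "\<exists>u. un u \<and> f x = u * (P * x)" if "x \<in> U w" for x
    proof -
      have "x \<noteq> 0" using that AA_nz U_def by auto
      then have "P * x \<noteq> 0" using P0 by simp
      then show "f x \<in> AA" "\<exists>u. un u \<and> f x = u * (P * x)" unfolding f_def using nA by auto
    qed
    have Ueq: "U z = U w \<union> f ` U w"
    proof
      show "U w \<union> f ` U w \<subseteq> U z"
      proof
        fix y assume "y \<in> U w \<union> f ` U w"
        then show "y \<in> U z"
        proof
          assume y: "y \<in> U w"
          then obtain v where v: "y \<in> AA" "w = y * v" "cop y v" by (auto simp: U_def)
          have "cop P y" using copPw v(2) cop_dvd2 by auto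
          then have "cop y (P * v)" using cop_mult2[OF cop_sym v(3)] by simp
          moreover have "z = y * (P * v)" using z v(2) by (simp add: algebra_simps)
          ultimately show "y \<in> U z" using v(1) by (auto simp: U_def)
        next
          assume "y \<in> f ` U w"
          then obtain x where x: "x \<in> U w" "y = f x" by blast
          then obtain v where v: "x \<in> AA" "w = x * v" "cop x v" by (auto simp: U_def)
          obtain u where u: "un u" "y = u * (P * x)" using f(2)[OF x(1)] x(2) by blast
          obtain u' where u': "un u'" "u' * u = 1" using unit_inv[OF u(1)] by blast
          have "z = y * (u' * v)" using z v(2) u u' by (simp add: algebra_simps)
          moreover have "cop y (u' * v)"
          proof -
            have "cop P v" using copPw v(2) cop_dvd2 by auto
            then have "cop (P * x) v" using cop_mult1 v(3) by blast
            then have "cop y v" using u cop_unit1 by simp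
            then show ?thesis using u' cop_unit2 by simp
          qed
          ultimately show "y \<in> U z" using f(1)[OF x(1)] x(2) by (auto simp: U_def)
        qed
      qed
      show "U z \<subseteq> U w \<union> f ` U w"
      proof
        fix y assume "y \<in> U z"
        then obtain v where v: "y \<in> AA" "z = y * v" "cop y v" by (auto simp: U_def)
        have y0: "y \<noteq> 0" using AA_nz v(1) .
        show "y \<in> U w \<union> f ` U w"
        proof (cases "p dvd y")
          case False
          then have "cop p y" using irr_cop p(1) by blast
          then have "cop P y" unfolding P_def by (rule cop_power1)
          have "y dvd z" using v(2) by simp
          then have "y dvd P * w" using z by simp
          from euclid[OF cop_sym[OF \<open>cop P y\<close>] this] have "y dvd w" .
          then obtain t where t: "w = y * t" by (auto simp: dvd_def)
          have "y * v = y * (P * t)" using z v(2) t by (simp add: algebra_simps)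
          then have "v = P * t" using y0 by simp
          then have "cop y t" using v(3) cop_dvd2 by auto
          then have "y \<in> U w" using v(1) t by (auto simp: U_def)
          then show ?thesis by blast
        next
          case True
          have "\<not> p dvd v"
          proof
            assume "p dvd v"
            then have "un p" using v(3) True cop_def by blast
            then show False using p(1) irr_def by blast
          qed
          then have "cop p v" using irr_cop p(1) by blast
          then have "cop P v" unfolding P_def by (rule cop_power1)
          moreover have "P dvd v * y"
          proof -
            have "P dvd z" using z by simp
            then show ?thesis using v(2) by (simp add: mult.commute)
          qed
          ultimately have "P dvd y" using euclid by blast
          then obtain x where x: "y = P * x" by (auto simp: dvd_def)
          have "P * w = P * (x * v)" using z v(2) x by (simp only: mult.assoc)
          then have wx: "w = x * v" using P0 mult_left_cancel by blast
          have cx: "cop x v" using v(3) x cop_dvd1 by auto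
          have x0: "x \<noteq> 0" using x y0 by auto
          obtain u where u: "un u" "nA x = u * x" using nA(2)[OF x0] by blast
          obtain u' where u': "un u'" "u' * u = 1" using unit_inv[OF u(1)] by blast
          have "w = nA x * (u' * v)" using wx u u' by (simp add: algebra_simps)
          moreover have "cop (nA x) (u' * v)" using cx u u' cop_unit1 cop_unit2 by simp
          ultimately have xU: "nA x \<in> U w" using nA(1)[OF x0] by (auto simp: U_def)
          have "y = u' * (P * nA x)" using x u u' by (simp add: algebra_simps)
          then have "f (nA x) = y" unfolding f_def using nA_eq[OF v(1) u'(1)] by simp
          then show ?thesis using xU by blast
        qed
      qed
    qed
    have disj: "U w \<inter> f ` U w = {}"
    proof (rule ccontr)
      assume "U w \<inter> f ` U w \<noteq> {}"
      then obtain x where x: "x \<in> U w" "f x \<in> U w" by blast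
      obtain u where u: "un u" "f x = u * (P * x)" using f(2)[OF x(1)] by blast
      have "p dvd P" unfolding P_def using k by (simp add: dvd_power)
      then have "p dvd P * x" by (rule dvd_mult2)
      then have "p dvd u * (P * x)" by (rule dvd_mult)
      then have "p dvd f x" using u(2) by simp
      moreover have "f x dvd w" using x(2) by (auto simp: U_def)
      ultimately show False using kw(2) dvd_trans by blast
    qed
    have inj: "inj_on f (U w)"
    proof
      fix x1 x2 assume x: "x1 \<in> U w" "x2 \<in> U w" "f x1 = f x2"
      obtain u1 where u1: "un u1" "f x1 = u1 * (P * x1)" using f(2)[OF x(1)] by blast
      obtain u2 where u2: "un u2" "f x2 = u2 * (P * x2)" using f(2)[OF x(2)] by blast
      obtain u1' where u1': "un u1'" "u1' * u1 = 1" using unit_inv[OF u1(1)] by blast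
      have "P * x1 = (u1' * u1) * (P * x1)" using u1'(2) by simp
      also have "\<dots> = u1' * f x1" using u1(2) by (simp add: mult.assoc)
      also have "\<dots> = u1' * (u2 * (P * x2))" using x(3) u2(2) by simp
      also have "\<dots> = P * ((u1' * u2) * x2)" by (simp add: algebra_simps)
      finally have "P * x1 = P * ((u1' * u2) * x2)" .
      then have "x1 = (u1' * u2) * x2" using P0 by simp
      moreover have "un (u1' * u2)" using mult_dvd_mono[OF u1'(1) u2(1)] by simp
      moreover have "x1 \<in> AA" "x2 \<in> AA" using x by (auto simp: U_def)
      ultimately show "x1 = x2" using AA_eq by blast
    qed
    have Nf: "N (f x) = N P * N x" if "x \<in> U w" for x
      using f(2)[OF that] un_N N_mult by auto
    have fin: "finite (U z)" using Ueq IH(1) by simp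
    have "S z = S w + (\<Sum>y\<in>f ` U w. N y)"
      unfolding S_def Ueq by (rule sum.union_disjoint) (use IH(1) disj in auto)
    also have "(\<Sum>y\<in>f ` U w. N y) = (\<Sum>x\<in>U w. N (f x))"
      using sum.reindex[OF inj] by simp
    also have "\<dots> = N P * S w" unfolding S_def sum_distrib_left using Nf by simp
    finally have Sz: "S z = (1 + N P) * S w" by (simp add: algebra_simps)
    have "N P mod 3 = (N p mod 3)^k mod 3" unfolding NP by (simp add: power_mod)
    moreover have "N p mod 3 \<in> {0,1}" using N_mod3 .
    ultimately have "N P mod 3 \<in> {0,1}" using k by (auto simp: power_0_left)
    then have r: "N P mod 3 = 0 \<or> N P mod 3 = 1" by blast
    have "(1 + N P) mod 3 = (1 + N P mod 3) mod 3" by (simp only: mod_add_right_eq)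
    then have "(1 + N P) mod 3 \<noteq> 0" using r by (elim disjE) simp_all
    from mod3_mult[OF this IH(2)] have "S z mod 3 \<noteq> 0" unfolding Sz .
    then show ?thesis using fin by blast
  qed
qed



lemma Eis_cx: assumes "w \<in> Eis" shows "\<exists>w0. w = cx w0"
proof -
  have "w = cx (Abs_eis w)" by (rule Abs_eis_inverse[symmetric]) (rule assms)
  then show ?thesis by (rule exI)
qed

lemma cx_mult: "cx (a * b) = cx a * cx b"
  by (rule times_eis.rep_eq)

lemma cx_1: "cx 1 = 1" by (rule one_eis.rep_eq)
lemma cx_0: "cx 0 = 0" by (rule zero_eis.rep_eq)

lemma eis_dvd_cx: "eis_dvd (cx a) (cx b) \<longleftrightarrow> a dvd b"
proof
  assume "eis_dvd (cx a) (cx b)"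
  then obtain w where w: "w \<in> Eis" "cx b = cx a * w" unfolding eis_dvd_def by blast
  obtain w0 where "w = cx w0" using Eis_cx[OF w(1)] by blast
  then have "cx b = cx (a * w0)" using w(2) cx_mult by simp
  then have "b = a * w0" using cx_inject by blast
  then show "a dvd b" by simp
next
  assume "a dvd b"
  then obtain w0 where "b = a * w0" by (auto simp: dvd_def)
  then have "cx b = cx a * cx w0" using cx_mult by simp
  then show "eis_dvd (cx a) (cx b)" unfolding eis_dvd_def using cx[of w0] by blast
qed

lemma eis_unit_cx: "eis_unit (cx d) \<longleftrightarrow> d dvd 1"
  unfolding eis_unit_def using eis_dvd_cx[of d 1] cx[of d] cx_1 by simp

lemma rel_prime_cx: "eis_rel_prime (cx a) (cx b) \<longleftrightarrow> cop a b"
proof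
  assume h: "eis_rel_prime (cx a) (cx b)"
  show "cop a b" unfolding cop_def
  proof (intro allI impI)
    fix d assume "d dvd a" "d dvd b"
    then have "eis_dvd (cx d) (cx a)" "eis_dvd (cx d) (cx b)" using eis_dvd_cx by auto
    then have "eis_unit (cx d)" using h cx[of d] unfolding eis_rel_prime_def by blast
    then show "d dvd 1" using eis_unit_cx by simp
  qed
next
  assume h: "cop a b"
  show "eis_rel_prime (cx a) (cx b)" unfolding eis_rel_prime_def
  proof (intro ballI impI)
    fix d assume d: "d \<in> Eis" "eis_dvd d (cx a) \<and> eis_dvd d (cx b)"
    obtain d0 where d0: "d = cx d0" using Eis_cx[OF d(1)] by blast
    then have "d0 dvd a" "d0 dvd b" using d(2) eis_dvd_cx by auto
    then have "d0 dvd 1" using h cop_def by blast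
    then show "eis_unit d" using d0 eis_unit_cx by simp
  qed
qed

lemma AA_nz': "x \<in> AA \<Longrightarrow> cx x \<noteq> 0"
  using AA_def eis_A_def by auto

lemma diamond_eq:
  assumes "z0 \<noteq> 0"
  shows "{x. eis_diamond x (cx z0)} = cx ` U z0"
proof
  have cz: "cx z0 \<noteq> 0" using assms cx_inject[of z0 0] cx_0 by simp
  show "{x. eis_diamond x (cx z0)} \<subseteq> cx ` U z0"
  proof
    fix x assume "x \<in> {x. eis_diamond x (cx z0)}"
    then have x: "x \<noteq> 0" "x \<in> eis_A" "eis_dvd x (cx z0)" "eis_rel_prime x (cx z0 / x)"
      unfolding eis_diamond_def by auto
    have "x \<in> Eis" using x(2) eis_A_def by auto
    then obtain x0 where x0: "x = cx x0" using Eis_cx by blast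
    have "x0 \<in> AA" unfolding AA_def using x(2) x0 by simp
    obtain w where w: "w \<in> Eis" "cx z0 = x * w" using x(3) eis_dvd_def by blast
    obtain w0 where w0: "w = cx w0" using Eis_cx[OF w(1)] by blast
    have "cx z0 = cx (x0 * w0)" using w(2) w0 x0 cx_mult by simp
    then have zw: "z0 = x0 * w0" using cx_inject by blast
    have "cx z0 / x = cx w0" using w(2) w0 x(1) by simp
    then have "cop x0 w0" using x(4) x0 rel_prime_cx by simp
    then have "x0 \<in> U z0" using \<open>x0 \<in> AA\<close> zw U_def by blast
    then show "x \<in> cx ` U z0" using x0 by blast
  qed
  show "cx ` U z0 \<subseteq> {x. eis_diamond x (cx z0)}"
  proof
    fix x assume "x \<in> cx ` U z0"
    then obtain x0 where x0: "x = cx x0" "x0 \<in> U z0" by blast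
    then obtain w0 where w0: "x0 \<in> AA" "z0 = x0 * w0" "cop x0 w0" using U_def by blast
    have xA: "x \<in> eis_A" using w0(1) unfolding x0(1) AA_def by simp
    have x_nz: "x \<noteq> 0" using AA_nz'[OF w0(1)] x0(1) by simp
    have "eis_dvd x (cx z0)" using x0(1) w0(2) eis_dvd_cx by simp
    moreover have "cx z0 = x * cx w0" using x0(1) w0(2) cx_mult by simp
    then have "cx z0 / x = cx w0" using x_nz by simp
    then have "eis_rel_prime x (cx z0 / x)" using w0(3) x0(1) rel_prime_cx by simp
    ultimately show "x \<in> {x. eis_diamond x (cx z0)}"
      unfolding eis_diamond_def using xA x_nz cz by simp
  qed
qed

lemma cmod_cx: "(cmod (cx x))^2 = real_of_int (N x)"
proof -
  obtain m n where x: "x = mk m n" using eis_cases by metis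
  show ?thesis using x cx_mk cmod_sq by simp
qed

theorem theorem2p4:
  fixes a b :: int
  assumes "a > 0" and "b > 0" and "coprime a b" and "3 dvd a"
  shows "\<not> (\<exists>z\<in>Eis. z \<noteq> 0 \<and> I_star 2 z = of_int a / of_int b)"
proof
  assume "\<exists>z\<in>Eis. z \<noteq> 0 \<and> I_star 2 z = of_int a / of_int b"
  then obtain z where z: "z \<in> Eis" "z \<noteq> 0" "I_star 2 z = of_int a / of_int b" by blast
  obtain z0 where z0: "z = cx z0" using Eis_cx[OF z(1)] by blast
  have z00: "z0 \<noteq> 0" using z(2) z0 cx_0 by auto
  have M: "finite (U z0)" "S z0 mod 3 \<noteq> 0" using main[OF z00] by auto
  have "delta_star 2 z = (\<Sum>x\<in>cx ` U z0. cmod x powi 2)"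
    unfolding delta_star_def z0 diamond_eq[OF z00] ..
  also have "\<dots> = (\<Sum>y\<in>U z0. cmod (cx y) powi 2)"
    by (rule sum.reindex[unfolded comp_def]) (rule inj_onI, simp add: cx_inject)
  also have "\<dots> = (\<Sum>y\<in>U z0. real_of_int (N y))"
    by (rule sum.cong) (simp_all add: cmod_cx[symmetric])
  also have "\<dots> = real_of_int (S z0)" unfolding S_def by simp
  finally have d: "delta_star 2 z = real_of_int (S z0)" .
  have c: "cmod z powi 2 = real_of_int (N z0)" unfolding z0 by (simp add: cmod_cx[symmetric])
  have Npos: "0 < N z0" using N_pos[OF z00] .
  have "real_of_int (S z0) / real_of_int (N z0) = real_of_int a / real_of_int b"
    using z(3) unfolding I_star_def d c by simp
  moreover have "real_of_int (N z0) \<noteq> 0" "real_of_int b \<noteq> 0" using Npos assms(2) z00 by auto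
  ultimately have "real_of_int (S z0) * real_of_int b = real_of_int a * real_of_int (N z0)"
    by (simp add: frac_eq_eq)
  then have "real_of_int (S z0 * b) = real_of_int (a * N z0)" by simp
  then have eq: "S z0 * b = a * N z0" by (simp only: of_int_eq_iff)
  have d3: "3 dvd S z0 * b" unfolding eq using assms(4) by simp
  have "\<not> 3 dvd b"
  proof
    assume "3 dvd b"
    from coprime_common_divisor[OF assms(3) assms(4) this] show False by simp
  qed
  have "b mod 3 \<noteq> 0"
  proof
    assume "b mod 3 = 0"
    then have "3 dvd b" by (rule mod_0_imp_dvd)
    with \<open>\<not> 3 dvd b\<close> show False by contradiction
  qed
  from mod3_mult[OF M(2) this] have "(S z0 * b) mod 3 \<noteq> 0" .
  then show False using dvd_imp_mod_0[OF d3] by contradiction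
qed

end
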